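(* Suppose that $$\sum_{y\in\mathbb Z^d}P\big[A_{1,0,y}\ln A_{1,0,y}\big]>|a|\ln|a|$$ (with the convention $0\ln0=0$). Then there exists a nonrandom constant $c>0$ such that, almost surely, $|\bar N_t|=O(e^{-ct})$ as $t\to\infty$.
   Context: Let $d\ge1$. For $x\in\mathbb R^d$, $|x|=\sum_i|x_i|$; for $\xi\in\mathbb R^{\mathbb Z^d}$, $|\xi|=\sum_{x}|\xi_x|$. Let $A_t=(A_{t,x,y})_{x,y\in\mathbb Z^d}$, $t=1,2,\dots$, be i.i.d. random matrices on a probability space $(\Omega,\mathcal F,P)$ ($P[X]$ denotes expectation) such that: (i) $A_{1,x,y}\ge0$; (ii) the columns $\{A_{1,\cdot,y}\}_{y\in\mathbb Z^d}$ are independent; (iii) $P[A_{1,x,y}^2]<\infty$ for all $x,y$; (iv) there is a nonrandom $r_A\in\mathbb N$ with $A_{1,x,y}=0$ a.s. if $|x-y|>r_A$; (v) $(A_{1,x+z,y+z})_{x,y}$ has the same law as $A_1$ for every $z\in\mathbb Z^d$; (vi) with $a_y=P[A_{1,0,y}]$, the set $\{x:\sum_y a_{x+y}a_y\neq0\}$ contains a linear basis of $\mathbb R^d$. Put $|a|=\sum_y a_y$. Given a nonrandom $N_0\in[0,\infty)^{\mathbb Z^d}$ with $\{x:N_{0,x}>0\}$ finite and nonempty, define $N_{t,y}=\sum_xN_{t-1,x}A_{t,x,y}$ ($t\ge1$), $\bar N_{t,x}=|a|^{-t}N_{t,x}$ and $|\bar N_t|=\sum_x\bar N_{t,x}$.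 *)

theory Defs
  imports "HOL-Probability.Probability" "HOL-Library.Landau_Symbols"
begin

text \<open>Sites of the lattice Z^d are modelled as int^'d for a finite index type 'd
  (so d = CARD('d) >= 1).\<close>

definition l1norm :: "int ^ 'd::finite \<Rightarrow> int" where
  "l1norm x = (\<Sum>i\<in>UNIV. \<bar>x $ i\<bar>)"

definition embR :: "int ^ 'd::finite \<Rightarrow> real ^ 'd" where
  "embR x = (\<chi> i. real_of_int (x $ i))"

definition matM :: "(int ^ 'd::finite \<Rightarrow> int ^ 'd \<Rightarrow> real) measure" where
  "matM = PiM UNIV (\<lambda>_. PiM UNIV (\<lambda>_. borel))"

definition colM :: "(int ^ 'd::finite \<Rightarrow> real) measure" where
  "colM = PiM UNIV (\<lambda>_. borel)"

fun pop :: "(int ^ 'd::finite \<Rightarrow> real) \<Rightarrow> (nat \<Rightarrow> 'w \<Rightarrow> int ^ 'd \<Rightarrow> int ^ 'd \<Rightarrow> real)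
            \<Rightarrow> nat \<Rightarrow> 'w \<Rightarrow> int ^ 'd \<Rightarrow> real" where
  "pop N0 A 0 \<omega> = N0"
| "pop N0 A (Suc t) \<omega> = (\<lambda>y. infsum (\<lambda>x. pop N0 A t \<omega> x * A (Suc t) \<omega> x y) UNIV)"

end

theory Submission
  imports Defs
begin


lemma powr_subadd:
  fixes a b th :: real
  assumes "a \<ge> 0" "b \<ge> 0" "0 < th" "th \<le> 1"
  shows "(a + b) powr th \<le> a powr th + b powr th"
proof (cases "a + b = 0")
  case True then show ?thesis using assms by simp
next
  case False
  then have s: "a + b > 0" using assms by simp
  have ha: "a / (a+b) \<le> (a/(a+b)) powr th"
    using powr_mono'[of th 1 "a/(a+b)"] assms s by (simp add: divide_le_eq_1)
  have hb: "b / (a+b) \<le> (b/(a+b)) powr th"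
    using powr_mono'[of th 1 "b/(a+b)"] assms s by (simp add: divide_le_eq_1)
  have "1 = a/(a+b) + b/(a+b)" using s by (simp add: add_divide_distrib[symmetric])
  also have "\<dots> \<le> (a/(a+b)) powr th + (b/(a+b)) powr th" using ha hb by simp
  also have "\<dots> = (a powr th + b powr th) / (a+b) powr th"
    using assms s by (simp add: powr_divide add_divide_distrib)
  finally have "1 \<le> (a powr th + b powr th) / (a+b) powr th" .
  then show ?thesis using s by (simp add: le_divide_eq)
qed

lemma powr_sum_subadd:
  fixes f :: "'a \<Rightarrow> real"
  assumes "finite S" "\<And>x. x \<in> S \<Longrightarrow> f x \<ge> 0" "0 < th" "th \<le> 1"
  shows "(\<Sum>x\<in>S. f x) powr th \<le> (\<Sum>x\<in>S. f x powr th)"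
  using assms
proof (induction S rule: finite_induct)
  case empty then show ?case by simp
next
  case (insert x F)
  have "(\<Sum>x\<in>insert x F. f x) powr th = (f x + (\<Sum>x\<in>F. f x)) powr th" using insert by simp
  also have "\<dots> \<le> f x powr th + (\<Sum>x\<in>F. f x) powr th"
    by (rule powr_subadd) (use insert in \<open>auto intro: sum_nonneg\<close>)
  also have "\<dots> \<le> f x powr th + (\<Sum>x\<in>F. f x powr th)" using insert by simp
  finally show ?case using insert by simp
qed

lemma quot_upper:
  fixes x e :: real assumes "x \<ge> 0" "0 < e"
  shows "(x - x powr (1 - e)) / e \<le> x * ln x"
proof (cases "x = 0")
  case True then show ?thesis by simp
next
  case False
  then have x: "x > 0" using assms by simp
  have "x powr (1 - e) = exp (ln x + (- e * ln x))"
    using x by (simp add: powr_def algebra_simps)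
  also have "\<dots> = x * exp (- e * ln x)" using x by (simp only: exp_add exp_ln)
  also have "\<dots> \<ge> x * (1 - e * ln x)"
    using x exp_ge_add_one_self[of "- e * ln x"] by (intro mult_left_mono) auto
  finally have "x - x powr (1 - e) \<le> e * (x * ln x)" by (simp add: algebra_simps)
  then show ?thesis using assms by (simp add: divide_le_eq mult.commute)
qed

lemma quot_lower:
  fixes x e :: real assumes "x \<ge> 0" "0 < e" "e \<le> 1/2"
  shows "-2 \<le> (x - x powr (1 - e)) / e"
proof -
  have "x powr (1 - e) - x \<le> 2 * e"
  proof (cases "x \<ge> 1")
    case True
    then have "x powr (1 - e) \<le> x powr 1" using assms by (intro powr_mono) auto
    then show ?thesis using True assms by simp
  next
    case False
    show ?thesis
    proof (cases "x = 0")
      case True then show ?thesis using assms by simp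
    next
      case False2: False
      with assms have x: "0 < x" by simp
      define L where "L = - ln x"
      have L: "L > 0" using x \<open>\<not> 1 \<le> x\<close> by (simp add: L_def)
      have e1: "x powr (1 - e) = x * exp (e * L)"
      proof -
        have "x powr (1 - e) = exp (ln x + e * L)"
          using x by (simp add: powr_def L_def algebra_simps)
        also have "\<dots> = x * exp (e * L)" using x by (simp only: exp_add exp_ln)
        finally show ?thesis .
      qed
      have "(1 - e*L) * exp (e*L) \<le> exp (- (e*L)) * exp (e*L)"
      proof (rule mult_right_mono)
        show "1 - e * L \<le> exp (- (e * L))" using exp_ge_add_one_self[of "- (e * L)"] by simp
      qed simp
      moreover have "exp (- (e*L)) * exp (e*L) = 1" by (simp add: exp_add[symmetric])
      ultimately have "(1 - e*L) * exp (e*L) \<le> 1" by linarith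
      then have e2: "exp (e*L) - 1 \<le> e * L * exp (e*L)" by (simp add: algebra_simps)
      have "x powr (1 - e) - x = x * (exp (e*L) - 1)" using e1 by (simp add: algebra_simps)
      also have "\<dots> \<le> x * (e * L * exp (e*L))" using e2 x by (intro mult_left_mono) auto
      also have "\<dots> = e * L * x powr (1 - e)" using e1 by simp
      also have "\<dots> \<le> e * L * x powr (1/2)"
        using assms x L \<open>\<not> 1 \<le> x\<close> by (intro mult_left_mono powr_mono') auto
      also have "\<dots> \<le> e * 2"
      proof -
        define u where "u = x powr (1/2)"
        have u: "u > 0" "u * u = x" using x by (simp_all add: u_def powr_add[symmetric])
        have "ln (u * u) = 2 * ln u" using u(1) by (simp add: ln_mult)
        then have "L = - 2 * ln u" using u by (simp add: L_def)
        moreover have "- ln u \<le> 1 / u - 1"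
          using ln_le_minus_one[of "1/u"] u by (simp add: ln_div)
        ultimately have "L * u \<le> 2 * (1 - u)" using u by (simp add: field_simps)
        then have "L * u \<le> 2" using u by simp
        then show ?thesis using assms by (simp add: u_def mult.assoc)
      qed
      finally show ?thesis by simp
    qed
  qed
  then show ?thesis using assms by (simp add: le_divide_eq)
qed




lemma quot_lim:
  fixes x :: real assumes "x \<ge> 0"
  shows "(\<lambda>n. (x - x powr (1 - 1/(real n+2))) / (1/(real n+2))) \<longlonglongrightarrow> x * ln x"
proof (cases "x = 0")
  case True then show ?thesis by simp
next
  case False
  then have x: "x > 0" using assms by simp
  define f where "f e = exp ((1 - e) * ln x)" for e :: real
  have d: "(f has_field_derivative (exp ((1 - 0) * ln x) * (- ln x))) (at 0)"
    unfolding f_def by (auto intro!: derivative_eq_intros)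
  then have d2: "((\<lambda>y. (f y - f 0) / (y - 0)) \<longlongrightarrow> - x * ln x) (at 0)"
    using x by (simp add: has_field_derivative_iff)
  have e: "filterlim (\<lambda>n. 1/(real n+2)) (at 0) sequentially"
  proof (rule filterlim_atI)
    show "(\<lambda>n. 1/(real n+2)) \<longlonglongrightarrow> 0"
      using LIMSEQ_ignore_initial_segment[OF lim_1_over_n, of 2]
      by (simp add: add.commute)
    show "\<forall>\<^sub>F n in sequentially. 1/(real n+2) \<noteq> 0" by simp
  qed
  have "(\<lambda>n. (f (1/(real n+2)) - f 0) / (1/(real n+2) - 0)) \<longlonglongrightarrow> - x * ln x"
    by (rule filterlim_compose[OF d2 e])
  then have "(\<lambda>n. - ((f (1/(real n+2)) - f 0) / (1/(real n+2) - 0))) \<longlonglongrightarrow> - (- x * ln x)"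
    by (rule tendsto_minus)
  moreover have "(x - x powr (1 - 1/(real n+2))) / (1/(real n+2)) = - ((f (1/(real n+2)) - f 0) / (1/(real n+2) - 0))" for n
    using x by (simp add: f_def powr_def field_simps)
  ultimately show ?thesis by simp
qed




lemma le_one_plus_sq: "(x::real) \<le> 1 + x * x"
proof (cases "x \<le> 1")
  case True then show ?thesis by (smt (verit) zero_le_square)
next
  case False then have "x \<le> x * x" by (simp add: mult_le_cancel_left1)
  then show ?thesis by simp
qed

lemma (in prob_space) exists_theta:
  fixes X :: "'i \<Rightarrow> 'a \<Rightarrow> real" and Z :: "'i set"
  assumes Z: "finite Z"
    and meas: "\<And>z. z \<in> Z \<Longrightarrow> X z \<in> borel_measurable M"
    and sq: "\<And>z. z \<in> Z \<Longrightarrow> integrable M (\<lambda>\<omega>. (X z \<omega>)\<^sup>2)"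
    and nn: "\<And>z \<omega>. X z \<omega> \<ge> 0"
    and s: "s = (\<Sum>z\<in>Z. expectation (X z))" "s > 0"
    and ent: "(\<Sum>z\<in>Z. expectation (\<lambda>\<omega>. X z \<omega> * ln (X z \<omega>))) > s * ln s"
  shows "\<exists>th. 0 < th \<and> th < 1 \<and> (\<Sum>z\<in>Z. expectation (\<lambda>\<omega>. X z \<omega> powr th)) < s powr th"
proof (rule ccontr)
  assume H: "\<not> ?thesis"
  define e where "e n = 1 / (real n + 2)" for n :: nat
  have e: "0 < e n" "e n \<le> 1/2" "0 < 1 - e n" "1 - e n < 1" for n
    by (auto simp: e_def field_simps)
  have Hn: "(\<Sum>z\<in>Z. expectation (\<lambda>\<omega>. X z \<omega> powr (1 - e n))) \<ge> s powr (1 - e n)" for n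
  proof -
    have "0 < 1 - e n" "1 - e n < 1" using e[of n] by auto
    then have "\<not> (\<Sum>z\<in>Z. expectation (\<lambda>\<omega>. X z \<omega> powr (1 - e n))) < s powr (1 - e n)"
      using H by blast
    then show ?thesis by simp
  qed
  have intX: "integrable M (X z)" if "z \<in> Z" for z
    by (rule Bochner_Integration.integrable_bound[OF Bochner_Integration.integrable_add[OF integrable_const[of 1] sq[OF that]]])
       (use meas[OF that] nn le_one_plus_sq in \<open>auto simp: power2_eq_square\<close>)
  have intP: "integrable M (\<lambda>\<omega>. X z \<omega> powr (1 - e n))" if "z \<in> Z" for z n
  proof (rule Bochner_Integration.integrable_bound[OF Bochner_Integration.integrable_add[OF integrable_const[of 1] intX[OF that]]])
    show "(\<lambda>\<omega>. X z \<omega> powr (1 - e n)) \<in> borel_measurable M" using meas[OF that] by measurable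
    show "AE \<omega> in M. norm (X z \<omega> powr (1 - e n)) \<le> norm (1 + X z \<omega>)"
    proof (intro AE_I2)
      fix \<omega>
      have "X z \<omega> powr (1 - e n) \<le> 1 + X z \<omega>"
      proof (cases "X z \<omega> \<le> 1")
        case True
        then have "X z \<omega> powr (1 - e n) \<le> 1" using powr_mono2[of "1 - e n" "X z \<omega>" 1] nn[of z \<omega>] e[of n] by simp
        then show ?thesis using nn[of z \<omega>] by simp
      next
        case False
        then have "X z \<omega> powr (1 - e n) \<le> X z \<omega> powr 1" using e[of n] by (intro powr_mono) auto
        then show ?thesis using False by simp
      qed
      then show "norm (X z \<omega> powr (1 - e n)) \<le> norm (1 + X z \<omega>)" using nn[of z \<omega>] by simp
    qed
  qed
  define F where "F n z \<omega> = (X z \<omega> - X z \<omega> powr (1 - e n)) / e n" for n z \<omega>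
  have lim_z: "(\<lambda>n. expectation (F n z)) \<longlonglongrightarrow> expectation (\<lambda>\<omega>. X z \<omega> * ln (X z \<omega>))" if z: "z \<in> Z" for z
  proof (rule integral_dominated_convergence[where w = "\<lambda>\<omega>. 2 + (X z \<omega>)\<^sup>2"])
    show "(\<lambda>\<omega>. X z \<omega> * ln (X z \<omega>)) \<in> borel_measurable M" using meas[OF z] by measurable
    show "F n z \<in> borel_measurable M" for n using meas[OF z] unfolding F_def by measurable
    show "integrable M (\<lambda>\<omega>. 2 + (X z \<omega>)\<^sup>2)" using sq[OF z] by simp
    show "AE \<omega> in M. (\<lambda>n. F n z \<omega>) \<longlonglongrightarrow> X z \<omega> * ln (X z \<omega>)"
      using quot_lim nn unfolding F_def e_def by simp
    show "AE \<omega> in M. norm (F n z \<omega>) \<le> 2 + (X z \<omega>)\<^sup>2" for n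
    proof (intro AE_I2)
      fix \<omega>
      let ?x = "X z \<omega>"
      have lo: "-2 \<le> F n z \<omega>" unfolding F_def using quot_lower[of ?x "e n"] nn e by simp
      have up: "F n z \<omega> \<le> ?x * ln ?x" unfolding F_def using quot_upper[of ?x "e n"] nn e by simp
      have "?x * ln ?x \<le> ?x\<^sup>2"
      proof (cases "?x = 0")
        case False
        then have "ln ?x \<le> ?x" using nn[of z \<omega>] ln_le_minus_one[of ?x] by simp
        then show ?thesis using nn[of z \<omega>] by (simp add: power2_eq_square mult_left_mono)
      qed simp
      moreover have "0 \<le> ?x\<^sup>2" by simp
      ultimately show "norm (F n z \<omega>) \<le> 2 + ?x\<^sup>2" unfolding real_norm_def abs_le_iff using lo up by linarith
    qed
  qed
  have lim: "(\<lambda>n. \<Sum>z\<in>Z. expectation (F n z)) \<longlonglongrightarrow> (\<Sum>z\<in>Z. expectation (\<lambda>\<omega>. X z \<omega> * ln (X z \<omega>)))"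
    by (rule tendsto_sum) (rule lim_z)
  have lim2: "(\<lambda>n. (s - s powr (1 - e n)) / e n) \<longlonglongrightarrow> s * ln s"
    using quot_lim[of s] s unfolding e_def by simp
  have le: "(\<Sum>z\<in>Z. expectation (F n z)) \<le> (s - s powr (1 - e n)) / e n" for n
  proof -
    have "(\<Sum>z\<in>Z. expectation (F n z)) = (\<Sum>z\<in>Z. (expectation (X z) - expectation (\<lambda>\<omega>. X z \<omega> powr (1 - e n))) / e n)"
      unfolding F_def by (intro sum.cong refl) (simp add: intX intP)
    also have "\<dots> = (s - (\<Sum>z\<in>Z. expectation (\<lambda>\<omega>. X z \<omega> powr (1 - e n)))) / e n"
      by (simp add: s(1) sum_divide_distrib[symmetric] sum_subtractf)
    also have "\<dots> \<le> (s - s powr (1 - e n)) / e n"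
      using Hn[of n] e[of n] by (intro divide_right_mono) auto
    finally show ?thesis .
  qed
  have "(\<Sum>z\<in>Z. expectation (\<lambda>\<omega>. X z \<omega> * ln (X z \<omega>))) \<le> s * ln s"
    by (rule LIMSEQ_le[OF lim lim2]) (use le in auto)
  then show False using ent by simp
qed




lemma l1norm_nonneg: "l1norm x \<ge> 0"
  unfolding l1norm_def by (simp add: sum_nonneg)

lemma l1norm_zero[simp]: "l1norm 0 = 0"
  by (simp add: l1norm_def)

lemma mat_entry_meas[measurable]: "(\<lambda>m. m x y) \<in> borel_measurable matM"
proof -
  have "(\<lambda>m. m x) \<in> measurable matM colM" unfolding matM_def colM_def
    by (rule measurable_component_singleton) simp
  moreover have "(\<lambda>c. c y) \<in> borel_measurable colM" unfolding colM_def
    by (rule measurable_component_singleton) simp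
  ultimately show ?thesis by (rule measurable_compose)
qed

lemma l1norm_comp: "\<bar>x $ i\<bar> \<le> l1norm x"
  unfolding l1norm_def by (rule member_le_sum) auto

lemma l1norm_triangle: "l1norm (a + b) \<le> l1norm a + l1norm b"
  unfolding l1norm_def sum.distrib[symmetric] by (rule sum_mono) (simp add: abs_triangle_ineq)

lemma l1norm_minus_commute: "l1norm (a - b) = l1norm (b - a)"
  unfolding l1norm_def by (intro sum.cong refl) simp

lemma finite_l1ball: "finite {z :: int ^ 'd::finite. l1norm z \<le> R}"
proof -
  have "vec_nth ` {z :: int ^ 'd. l1norm z \<le> R} \<subseteq> PiE UNIV (\<lambda>_. {-R..R})"
  proof
    fix f assume "f \<in> vec_nth ` {z :: int ^ 'd. l1norm z \<le> R}"
    then obtain z :: "int ^ 'd" where z: "l1norm z \<le> R" "f = vec_nth z" by auto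
    have "z $ i \<in> {-R..R}" for i using l1norm_comp[of z i] z by (simp, smt (verit))
    then show "f \<in> PiE UNIV (\<lambda>_. {-R..R})" using z by auto
  qed
  then have "finite (vec_nth ` {z :: int ^ 'd. l1norm z \<le> R})"
    by (rule finite_subset) (intro finite_PiE, auto)
  then show ?thesis by (rule finite_imageD) (auto intro: inj_onI simp: vec_eq_iff)
qed

definition SS :: "(int ^ 'd::finite \<Rightarrow> real) \<Rightarrow> nat \<Rightarrow> nat \<Rightarrow> (int ^ 'd) set" where
  "SS N0 rA t = {x. \<exists>x0. 0 < N0 x0 \<and> l1norm (x - x0) \<le> int (t * rA)}"

lemma finite_SS:
  assumes "finite {x. N0 x > 0}"
  shows "finite (SS N0 rA t)"
proof -
  have "SS N0 rA t \<subseteq> (\<Union>x0\<in>{x. N0 x > 0}. (\<lambda>z. x0 + z) ` {z. l1norm z \<le> int (t * rA)})"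
  proof
    fix x assume "x \<in> SS N0 rA t"
    then obtain x0 where "0 < N0 x0" "l1norm (x - x0) \<le> int (t * rA)" by (auto simp: SS_def)
    then show "x \<in> (\<Union>x0\<in>{x. N0 x > 0}. (\<lambda>z. x0 + z) ` {z. l1norm z \<le> int (t * rA)})"
      by (intro UN_I[of x0]) (auto intro!: image_eqI[of _ _ "x - x0"])
  qed
  then show ?thesis
    by (rule finite_subset) (intro finite_UN_I assms finite_imageI finite_l1ball)
qed

lemma SS_step:
  assumes "x \<in> SS N0 rA t" "y \<notin> SS N0 rA (Suc t)"
  shows "int rA < l1norm (x - y)"
proof (rule ccontr)
  assume "\<not> ?thesis"
  then have h: "l1norm (y - x) \<le> int rA" using l1norm_minus_commute[of x y] by simp
  obtain x0 where x0: "0 < N0 x0" "l1norm (x - x0) \<le> int (t * rA)" using assms(1) by (auto simp: SS_def)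
  have "l1norm (y - x0) \<le> l1norm (y - x) + l1norm (x - x0)"
    using l1norm_triangle[of "y - x" "x - x0"] by simp
  also have "\<dots> \<le> int (Suc t * rA)" using h x0 by simp
  finally show False using assms(2) x0 by (auto simp: SS_def)
qed

fun Q :: "(int ^ 'd::finite \<Rightarrow> real) \<Rightarrow> nat \<Rightarrow> nat \<Rightarrow> (nat \<Rightarrow> int ^ 'd \<Rightarrow> int ^ 'd \<Rightarrow> real) \<Rightarrow> int ^ 'd \<Rightarrow> real" where
  "Q N0 rA 0 F = N0"
| "Q N0 rA (Suc t) F = (\<lambda>y. \<Sum>x\<in>SS N0 rA t. Q N0 rA t F x * F (Suc t) x y)"

definition good :: "nat \<Rightarrow> (nat \<Rightarrow> int ^ 'd::finite \<Rightarrow> int ^ 'd \<Rightarrow> real) \<Rightarrow> bool" where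
  "good rA F \<longleftrightarrow> (\<forall>t\<ge>1. \<forall>x y. int rA < l1norm (x - y) \<longrightarrow> F t x y = 0)"

lemma Q_zero:
  assumes "good rA F" "x \<notin> SS N0 rA t" "\<And>x. N0 x \<ge> 0"
  shows "Q N0 rA t F x = 0"
proof (cases t)
  case 0
  have "\<not> 0 < N0 x"
  proof
    assume "0 < N0 x" then have "x \<in> SS N0 rA 0" by (auto simp: SS_def intro!: exI[of _ x])
    then show False using assms 0 by simp
  qed
  then show ?thesis using assms(3)[of x] 0 by simp
next
  case (Suc s)
  have "F (Suc s) x' x = 0" if "x' \<in> SS N0 rA s" for x'
    using assms(1) SS_step[OF that, of x] assms(2) Suc unfolding good_def by auto
  then show ?thesis using Suc by simp
qed

lemma Q_cong: "(\<And>i. i \<in> {1..t} \<Longrightarrow> F i = G i) \<Longrightarrow> Q N0 rA t F = Q N0 rA t G"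
  by (induction t) auto

lemma pop_Q:
  assumes "good rA (\<lambda>i. A i \<omega>)" "finite {x. N0 x > 0}" "\<And>x. N0 x \<ge> 0"
  shows "pop N0 A t \<omega> = Q N0 rA t (\<lambda>i. A i \<omega>)"
proof (induction t)
  case 0 then show ?case by simp
next
  case (Suc t)
  show ?case
  proof
    fix y
    have "pop N0 A (Suc t) \<omega> y = infsum (\<lambda>x. Q N0 rA t (\<lambda>i. A i \<omega>) x * A (Suc t) \<omega> x y) UNIV"
      using Suc by simp
    also have "\<dots> = infsum (\<lambda>x. Q N0 rA t (\<lambda>i. A i \<omega>) x * A (Suc t) \<omega> x y) (SS N0 rA t)"
      by (rule infsum_cong_neutral) (use Q_zero[OF assms(1) _ assms(3)] in auto)
    also have "\<dots> = Q N0 rA (Suc t) (\<lambda>i. A i \<omega>) y"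
      using finite_SS[OF assms(2)] by simp
    finally show "pop N0 A (Suc t) \<omega> y = Q N0 rA (Suc t) (\<lambda>i. A i \<omega>) y" .
  qed
qed

lemma Q_measurable:
  assumes "{1..t} \<subseteq> I"
  shows "(\<lambda>F. Q N0 rA t F x) \<in> borel_measurable (PiM I (\<lambda>_. matM))"
  using assms
proof (induction t arbitrary: x)
  case 0 then show ?case by simp
next
  case (Suc t)
  have IH: "(\<lambda>F. Q N0 rA t F x') \<in> borel_measurable (PiM I (\<lambda>_. matM))" for x'
    using Suc by (intro Suc.IH) auto
  have "Suc t \<in> I" using Suc.prems by auto
  then have m0: "(\<lambda>F. F (Suc t)) \<in> measurable (PiM I (\<lambda>_. matM)) matM"
    by (rule measurable_component_singleton)
  have m: "(\<lambda>F. F (Suc t) x' x) \<in> borel_measurable (PiM I (\<lambda>_. matM))" for x'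
    using measurable_compose[OF m0 mat_entry_meas[of x' x]] by simp
  show ?case using IH m by simp
qed




lemma (in prob_space) indep_var_nn_integral:
  fixes X Y :: "'a \<Rightarrow> ennreal"
  assumes "indep_var borel X borel Y"
  shows "(\<integral>\<^sup>+\<omega>. X \<omega> * Y \<omega> \<partial>M) = (\<integral>\<^sup>+\<omega>. X \<omega> \<partial>M) * (\<integral>\<^sup>+\<omega>. Y \<omega> \<partial>M)"
proof -
  have **: "(\<lambda> _. borel) = case_bool borel borel"
    by (rule ext, metis (full_types) bool.simps(3) bool.simps(4))
  have iv: "indep_vars (\<lambda>_. borel) (case_bool X Y) UNIV"
    using assms unfolding indep_var_def ** .
  have "(\<integral>\<^sup>+\<omega>. X \<omega> * Y \<omega> \<partial>M) = (\<integral>\<^sup>+\<omega>. (\<Prod>i\<in>UNIV. case_bool X Y i \<omega>) \<partial>M)"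
    by (simp add: UNIV_bool mult.commute)
  also have "\<dots> = (\<Prod>i\<in>UNIV. \<integral>\<^sup>+\<omega>. case_bool X Y i \<omega> \<partial>M)"
    by (rule indep_vars_nn_integral[OF _ iv]) auto
  also have "\<dots> = (\<integral>\<^sup>+\<omega>. X \<omega> \<partial>M) * (\<integral>\<^sup>+\<omega>. Y \<omega> \<partial>M)"
    by (simp add: UNIV_bool mult.commute)
  finally show ?thesis .
qed

locale sys = prob_space M for M :: "'w measure" +
  fixes A :: "nat \<Rightarrow> 'w \<Rightarrow> int ^ 'd::finite \<Rightarrow> int ^ 'd \<Rightarrow> real"
    and N0 :: "int ^ 'd \<Rightarrow> real" and rA :: nat
  assumes indep: "indep_vars (\<lambda>_. matM) A {1..}"
    and distr_eq: "\<And>t. t \<ge> 1 \<Longrightarrow> distr M matM (A t) = distr M matM (A 1)"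
    and range: "\<And>x y. l1norm (x - y) > int rA \<Longrightarrow> (AE \<omega> in M. A 1 \<omega> x y = 0)"
    and shift: "\<And>z. distr M matM (\<lambda>\<omega>. \<lambda>x y. A 1 \<omega> (x + z) (y + z)) = distr M matM (A 1)"
    and N0_nonneg: "\<And>x. N0 x \<ge> 0" and N0_fin: "finite {x. N0 x > 0}"
begin

lemma A_meas: "t \<ge> 1 \<Longrightarrow> A t \<in> measurable M matM"
  using indep unfolding indep_vars_def by auto

lemma A_entry_meas: "t \<ge> 1 \<Longrightarrow> (\<lambda>\<omega>. A t \<omega> x y) \<in> borel_measurable M"
  using measurable_compose[OF A_meas mat_entry_meas[of x y]] by simp

lemma AE_transfer:
  assumes "t \<ge> 1" "{m \<in> space matM. P m} \<in> sets matM" "AE \<omega> in M. P (A 1 \<omega>)"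
  shows "AE \<omega> in M. P (A t \<omega>)"
proof -
  have "AE m in distr M matM (A 1). P m"
    using assms A_meas[of 1] by (subst AE_distr_iff) auto
  then have "AE m in distr M matM (A t). P m" unfolding distr_eq[OF assms(1)] .
  then show ?thesis using assms A_meas[OF assms(1)] by (subst (asm) AE_distr_iff) auto
qed

lemma AE_good: "AE \<omega> in M. good rA (\<lambda>i. A i \<omega>)"
proof -
  have "AE \<omega> in M. \<forall>t. \<forall>x. \<forall>y. (t \<ge> 1 \<and> int rA < l1norm (x - y)) \<longrightarrow> A t \<omega> x y = 0"
  proof (intro AE_all_countable[THEN iffD2] allI)
    fix t and x y :: "int ^ 'd"
    show "AE \<omega> in M. (t \<ge> 1 \<and> int rA < l1norm (x - y)) \<longrightarrow> A t \<omega> x y = 0"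
    proof (cases "t \<ge> 1 \<and> int rA < l1norm (x - y)")
      case True
      have "AE \<omega> in M. A t \<omega> x y = 0"
      proof (rule AE_transfer[where P = "\<lambda>m. m x y = 0"])
        show "{m \<in> space matM. m x y = 0} \<in> sets matM" by measurable
      qed (use True range in auto)
      then show ?thesis by auto
    qed auto
  qed
  then show ?thesis unfolding good_def by auto
qed

lemma nn_transfer:
  assumes "t \<ge> 1" "h \<in> borel_measurable matM"
  shows "(\<integral>\<^sup>+\<omega>. h (A t \<omega>) \<partial>M) = (\<integral>\<^sup>+\<omega>. h (A 1 \<omega>) \<partial>M)"
proof -
  have "(\<integral>\<^sup>+\<omega>. h (A t \<omega>) \<partial>M) = integral\<^sup>N (distr M matM (A t)) h"
    using assms A_meas by (subst nn_integral_distr) auto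
  also have "\<dots> = integral\<^sup>N (distr M matM (A 1)) h" using distr_eq[OF assms(1)] by simp
  also have "\<dots> = (\<integral>\<^sup>+\<omega>. h (A 1 \<omega>) \<partial>M)"
    using assms A_meas by (subst nn_integral_distr) auto
  finally show ?thesis .
qed

lemma shift_meas: "(\<lambda>\<omega>. \<lambda>x y. A 1 \<omega> (x + z) (y + z)) \<in> measurable M matM"
proof -
  have inner: "(\<lambda>m. \<lambda>y. m (x' + z) (y + z)) \<in> measurable matM colM" for x'
    unfolding colM_def
    by (rule measurable_PiM_single'[where f = "\<lambda>y m. m (x' + z) (y + z)"])
       (auto simp: space_PiM PiE_def extensional_def)
  have mM: "matM = PiM UNIV (\<lambda>_. colM)" by (simp add: matM_def colM_def)
  have "(\<lambda>m. \<lambda>x y. m (x + z) (y + z)) \<in> measurable matM (PiM UNIV (\<lambda>_. colM))"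
    by (rule measurable_PiM_single'[where f = "\<lambda>x m. \<lambda>y. m (x + z) (y + z)"])
       (use inner in \<open>auto simp: space_PiM PiE_def extensional_def colM_def\<close>)
  then have "(\<lambda>m. \<lambda>x y. m (x + z) (y + z)) \<in> measurable matM matM" by (simp only: mM[symmetric])
  from measurable_compose[OF A_meas[of 1] this] show ?thesis by simp
qed

lemma nn_shift:
  fixes th :: real
  shows "(\<integral>\<^sup>+\<omega>. ennreal (\<bar>A 1 \<omega> x y\<bar> powr th) \<partial>M) = (\<integral>\<^sup>+\<omega>. ennreal (\<bar>A 1 \<omega> 0 (y - x)\<bar> powr th) \<partial>M)"
proof -
  define h where "h m = ennreal (\<bar>m 0 (y - x)\<bar> powr th)" for m :: "int ^ 'd \<Rightarrow> int ^ 'd \<Rightarrow> real"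
  have h: "h \<in> borel_measurable matM" unfolding h_def by measurable
  have "(\<integral>\<^sup>+\<omega>. ennreal (\<bar>A 1 \<omega> 0 (y - x)\<bar> powr th) \<partial>M) = integral\<^sup>N (distr M matM (A 1)) h"
    using h A_meas[of 1] by (subst nn_integral_distr) (auto simp: h_def)
  also have "\<dots> = integral\<^sup>N (distr M matM (\<lambda>\<omega>. \<lambda>x' y'. A 1 \<omega> (x' + x) (y' + x))) h"
    using shift[of x] by simp
  also have "\<dots> = (\<integral>\<^sup>+\<omega>. ennreal (\<bar>A 1 \<omega> x y\<bar> powr th) \<partial>M)"
    using h shift_meas[of x] by (subst nn_integral_distr) (auto simp: h_def)
  finally show ?thesis by simp
qed

lemma nn_zero_outside:
  fixes th :: real
  assumes "int rA < l1norm z" "th > 0"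
  shows "(\<integral>\<^sup>+\<omega>. ennreal (\<bar>A 1 \<omega> 0 z\<bar> powr th) \<partial>M) = 0"
proof -
  have "l1norm (0 - z) = l1norm z" using l1norm_minus_commute[of 0 z] by simp
  then have "AE \<omega> in M. A 1 \<omega> 0 z = 0" using range[of 0 z] assms by simp
  then have "(\<integral>\<^sup>+\<omega>. ennreal (\<bar>A 1 \<omega> 0 z\<bar> powr th) \<partial>M) = (\<integral>\<^sup>+\<omega>. 0 \<partial>M)"
    by (intro nn_integral_cong_AE) auto
  then show ?thesis by simp
qed

lemma nn_indep:
  fixes th :: real
  shows "(\<integral>\<^sup>+\<omega>. ennreal (\<bar>Q N0 rA t (\<lambda>i. A i \<omega>) x\<bar> powr th) * ennreal (\<bar>A (Suc t) \<omega> x y\<bar> powr th) \<partial>M)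
    = (\<integral>\<^sup>+\<omega>. ennreal (\<bar>Q N0 rA t (\<lambda>i. A i \<omega>) x\<bar> powr th) \<partial>M) * (\<integral>\<^sup>+\<omega>. ennreal (\<bar>A (Suc t) \<omega> x y\<bar> powr th) \<partial>M)"
proof (rule indep_var_nn_integral)
  have iv: "indep_var (PiM {1..t} (\<lambda>_. matM)) (\<lambda>\<omega>. restrict (\<lambda>i. A i \<omega>) {1..t})
                     (PiM {Suc t} (\<lambda>_. matM)) (\<lambda>\<omega>. restrict (\<lambda>i. A i \<omega>) {Suc t})"
    by (rule indep_var_restrict[OF indep]) auto
  define Y1 where "Y1 F = ennreal (\<bar>Q N0 rA t F x\<bar> powr th)" for F :: "nat \<Rightarrow> int ^ 'd \<Rightarrow> int ^ 'd \<Rightarrow> real"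
  define Y2 where "Y2 F = ennreal (\<bar>F (Suc t) x y\<bar> powr th)" for F :: "nat \<Rightarrow> int ^ 'd \<Rightarrow> int ^ 'd \<Rightarrow> real"
  have m1: "Y1 \<in> borel_measurable (PiM {1..t} (\<lambda>_. matM))"
    using Q_measurable[of t "{1..t}" N0 rA x] unfolding Y1_def by measurable
  have m0: "(\<lambda>F. F (Suc t)) \<in> measurable (PiM {Suc t} (\<lambda>_. matM)) matM"
    by (rule measurable_component_singleton) simp
  have m2: "Y2 \<in> borel_measurable (PiM {Suc t} (\<lambda>_. matM))"
    using measurable_compose[OF m0 mat_entry_meas[of x y]] unfolding Y2_def by measurable
  have "indep_var borel (Y1 \<circ> (\<lambda>\<omega>. restrict (\<lambda>i. A i \<omega>) {1..t})) borel (Y2 \<circ> (\<lambda>\<omega>. restrict (\<lambda>i. A i \<omega>) {Suc t}))"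
    by (rule indep_var_compose[OF iv m1 m2])
  moreover have "Y1 \<circ> (\<lambda>\<omega>. restrict (\<lambda>i. A i \<omega>) {1..t}) = (\<lambda>\<omega>. ennreal (\<bar>Q N0 rA t (\<lambda>i. A i \<omega>) x\<bar> powr th))"
  proof
    fix \<omega>
    have "Q N0 rA t (restrict (\<lambda>i. A i \<omega>) {1..t}) = Q N0 rA t (\<lambda>i. A i \<omega>)"
      by (rule Q_cong) simp
    then show "(Y1 \<circ> (\<lambda>\<omega>. restrict (\<lambda>i. A i \<omega>) {1..t})) \<omega> = ennreal (\<bar>Q N0 rA t (\<lambda>i. A i \<omega>) x\<bar> powr th)"
      by (simp add: Y1_def)
  qed
  moreover have "Y2 \<circ> (\<lambda>\<omega>. restrict (\<lambda>i. A i \<omega>) {Suc t}) = (\<lambda>\<omega>. ennreal (\<bar>A (Suc t) \<omega> x y\<bar> powr th))"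
    by (auto simp: Y2_def)
  ultimately show "indep_var borel (\<lambda>\<omega>. ennreal (\<bar>Q N0 rA t (\<lambda>i. A i \<omega>) x\<bar> powr th))
      borel (\<lambda>\<omega>. ennreal (\<bar>A (Suc t) \<omega> x y\<bar> powr th))" by simp
qed

end



lemma sum_shift_le:
  fixes g :: "int ^ 'd::finite \<Rightarrow> ennreal"
  assumes "finite W" "finite Z" "\<And>z. z \<notin> Z \<Longrightarrow> g z = 0"
  shows "(\<Sum>y\<in>W. g (y - x)) \<le> (\<Sum>z\<in>Z. g z)"
proof -
  have "(\<Sum>y\<in>W. g (y - x)) = (\<Sum>z\<in>(\<lambda>y. y - x) ` W. g z)"
    by (rule sum.reindex[symmetric, unfolded comp_def]) (auto intro: inj_onI)
  also have "\<dots> \<le> (\<Sum>z\<in>(\<lambda>y. y - x) ` W \<union> Z. g z)"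
    by (rule sum_mono2) (use assms in auto)
  also have "\<dots> = (\<Sum>z\<in>Z. g z)"
    by (rule sum.mono_neutral_right) (use assms in auto)
  finally show ?thesis .
qed

context sys begin

definition Phi :: "real \<Rightarrow> nat \<Rightarrow> 'w \<Rightarrow> real" where
  "Phi th t \<omega> = (\<Sum>x\<in>SS N0 rA t. \<bar>Q N0 rA t (\<lambda>i. A i \<omega>) x\<bar> powr th)"

definition K :: "real \<Rightarrow> ennreal" where
  "K th = (\<Sum>z\<in>{z. l1norm z \<le> int rA}. \<integral>\<^sup>+\<omega>. ennreal (\<bar>A 1 \<omega> 0 z\<bar> powr th) \<partial>M)"

lemma q_meas: "(\<lambda>\<omega>. Q N0 rA t (\<lambda>i. A i \<omega>) x) \<in> borel_measurable M"
proof -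
  have r: "(\<lambda>\<omega>. restrict (\<lambda>i. A i \<omega>) {1..t}) \<in> measurable M (PiM {1..t} (\<lambda>_. matM))"
    by (rule measurable_restrict) (use A_meas in auto)
  have "(\<lambda>\<omega>. Q N0 rA t (restrict (\<lambda>i. A i \<omega>) {1..t}) x) \<in> borel_measurable M"
    using measurable_compose[OF r Q_measurable[of t "{1..t}" N0 rA x]] by simp
  moreover have "Q N0 rA t (restrict (\<lambda>i. A i \<omega>) {1..t}) = Q N0 rA t (\<lambda>i. A i \<omega>)" for \<omega>
    by (rule Q_cong) simp
  ultimately show ?thesis by simp
qed

lemma Phi_meas: "Phi th t \<in> borel_measurable M"
proof -
  have "(\<lambda>\<omega>. \<Sum>x\<in>SS N0 rA t. \<bar>Q N0 rA t (\<lambda>i. A i \<omega>) x\<bar> powr th) \<in> borel_measurable M"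
    using q_meas by measurable
  then show ?thesis unfolding Phi_def[abs_def] .
qed

lemma Phi_nonneg: "Phi th t \<omega> \<ge> 0"
  unfolding Phi_def by (simp add: sum_nonneg)

lemma Phi_pointwise:
  assumes th: "0 < th" "th \<le> 1"
  shows "Phi th (Suc t) \<omega> \<le> (\<Sum>y\<in>SS N0 rA (Suc t). \<Sum>x\<in>SS N0 rA t.
            \<bar>Q N0 rA t (\<lambda>i. A i \<omega>) x\<bar> powr th * \<bar>A (Suc t) \<omega> x y\<bar> powr th)"
  unfolding Phi_def
proof (rule sum_mono)
  fix y
  let ?q = "\<lambda>x. Q N0 rA t (\<lambda>i. A i \<omega>) x" and ?a = "\<lambda>x. A (Suc t) \<omega> x y"
  have fin: "finite (SS N0 rA t)" using finite_SS[OF N0_fin] .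
  have "\<bar>Q N0 rA (Suc t) (\<lambda>i. A i \<omega>) y\<bar> = \<bar>\<Sum>x\<in>SS N0 rA t. ?q x * ?a x\<bar>" by simp
  also have "\<dots> \<le> (\<Sum>x\<in>SS N0 rA t. \<bar>?q x * ?a x\<bar>)" by (rule sum_abs)
  finally have "\<bar>Q N0 rA (Suc t) (\<lambda>i. A i \<omega>) y\<bar> powr th \<le> (\<Sum>x\<in>SS N0 rA t. \<bar>?q x * ?a x\<bar>) powr th"
    using th by (intro powr_mono2) auto
  also have "\<dots> \<le> (\<Sum>x\<in>SS N0 rA t. \<bar>?q x * ?a x\<bar> powr th)"
    by (rule powr_sum_subadd) (use fin th in auto)
  also have "\<dots> = (\<Sum>x\<in>SS N0 rA t. \<bar>?q x\<bar> powr th * \<bar>?a x\<bar> powr th)"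
    by (simp add: abs_mult powr_mult)
  finally show "\<bar>Q N0 rA (Suc t) (\<lambda>i. A i \<omega>) y\<bar> powr th \<le> (\<Sum>x\<in>SS N0 rA t. \<bar>?q x\<bar> powr th * \<bar>?a x\<bar> powr th)" .
qed

lemma moment_step:
  assumes th: "0 < th" "th \<le> 1"
  shows "(\<integral>\<^sup>+\<omega>. ennreal (Phi th (Suc t) \<omega>) \<partial>M) \<le> K th * (\<integral>\<^sup>+\<omega>. ennreal (Phi th t \<omega>) \<partial>M)"
proof -
  let ?S = "SS N0 rA t" and ?S' = "SS N0 rA (Suc t)" and ?Z = "{z :: int ^ 'd. l1norm z \<le> int rA}"
  define qq where "qq x \<omega> = ennreal (\<bar>Q N0 rA t (\<lambda>i. A i \<omega>) x\<bar> powr th)" for x \<omega>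
  define aa where "aa x y \<omega> = ennreal (\<bar>A (Suc t) \<omega> x y\<bar> powr th)" for x y \<omega>
  define g where "g z = (\<integral>\<^sup>+\<omega>. ennreal (\<bar>A 1 \<omega> 0 z\<bar> powr th) \<partial>M)" for z
  have finS: "finite ?S" "finite ?S'" using finite_SS[OF N0_fin] by auto
  have qq_meas: "qq x \<in> borel_measurable M" for x unfolding qq_def using q_meas by measurable
  have aa_meas: "aa x y \<in> borel_measurable M" for x y
    unfolding aa_def using A_entry_meas[of "Suc t" x y] by measurable
  have "(\<integral>\<^sup>+\<omega>. ennreal (Phi th (Suc t) \<omega>) \<partial>M) \<le> (\<integral>\<^sup>+\<omega>. (\<Sum>y\<in>?S'. \<Sum>x\<in>?S. qq x \<omega> * aa x y \<omega>) \<partial>M)"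
  proof (rule nn_integral_mono)
    fix \<omega>
    have "ennreal (Phi th (Suc t) \<omega>) \<le> ennreal (\<Sum>y\<in>?S'. \<Sum>x\<in>?S.
            \<bar>Q N0 rA t (\<lambda>i. A i \<omega>) x\<bar> powr th * \<bar>A (Suc t) \<omega> x y\<bar> powr th)"
      by (rule ennreal_leI) (rule Phi_pointwise[OF th])
    also have "\<dots> = (\<Sum>y\<in>?S'. \<Sum>x\<in>?S. qq x \<omega> * aa x y \<omega>)"
      by (simp add: qq_def aa_def ennreal_mult sum_nonneg flip: sum_ennreal)
    finally show "ennreal (Phi th (Suc t) \<omega>) \<le> (\<Sum>y\<in>?S'. \<Sum>x\<in>?S. qq x \<omega> * aa x y \<omega>)" .
  qed
  also have "\<dots> = (\<Sum>y\<in>?S'. \<Sum>x\<in>?S. \<integral>\<^sup>+\<omega>. qq x \<omega> * aa x y \<omega> \<partial>M)"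
    using qq_meas aa_meas by (simp add: nn_integral_sum)
  also have "\<dots> = (\<Sum>y\<in>?S'. \<Sum>x\<in>?S. (\<integral>\<^sup>+\<omega>. qq x \<omega> \<partial>M) * g (y - x))"
  proof (intro sum.cong refl)
    fix x y
    have "(\<integral>\<^sup>+\<omega>. qq x \<omega> * aa x y \<omega> \<partial>M) = (\<integral>\<^sup>+\<omega>. qq x \<omega> \<partial>M) * (\<integral>\<^sup>+\<omega>. aa x y \<omega> \<partial>M)"
      unfolding qq_def aa_def by (rule nn_indep)
    also have "(\<integral>\<^sup>+\<omega>. aa x y \<omega> \<partial>M) = (\<integral>\<^sup>+\<omega>. ennreal (\<bar>A 1 \<omega> x y\<bar> powr th) \<partial>M)"
      unfolding aa_def
      by (rule nn_transfer[where h = "\<lambda>m. ennreal (\<bar>m x y\<bar> powr th)"]) (auto intro: measurable_compose[OF mat_entry_meas])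
    also have "\<dots> = g (y - x)" unfolding g_def by (rule nn_shift)
    finally show "(\<integral>\<^sup>+\<omega>. qq x \<omega> * aa x y \<omega> \<partial>M) = (\<integral>\<^sup>+\<omega>. qq x \<omega> \<partial>M) * g (y - x)" .
  qed
  also have "\<dots> = (\<Sum>x\<in>?S. (\<integral>\<^sup>+\<omega>. qq x \<omega> \<partial>M) * (\<Sum>y\<in>?S'. g (y - x)))"
    by (subst sum.swap) (simp add: sum_distrib_left)
  also have "\<dots> \<le> (\<Sum>x\<in>?S. (\<integral>\<^sup>+\<omega>. qq x \<omega> \<partial>M) * K th)"
  proof (intro sum_mono mult_left_mono)
    fix x
    show "(\<Sum>y\<in>?S'. g (y - x)) \<le> K th"
      unfolding K_def g_def[symmetric]
    proof (rule sum_shift_le)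
      show "finite ?Z" by (rule finite_l1ball)
      show "g z = 0" if "z \<notin> ?Z" for z unfolding g_def
        by (rule nn_zero_outside) (use that th in auto)
    qed (use finS in auto)
  qed auto
  also have "\<dots> = K th * (\<Sum>x\<in>?S. (\<integral>\<^sup>+\<omega>. qq x \<omega> \<partial>M))"
    by (simp add: sum_distrib_left mult.commute)
  also have "(\<Sum>x\<in>?S. (\<integral>\<^sup>+\<omega>. qq x \<omega> \<partial>M)) = (\<integral>\<^sup>+\<omega>. (\<Sum>x\<in>?S. qq x \<omega>) \<partial>M)"
    using qq_meas by (simp add: nn_integral_sum)
  also have "\<dots> = (\<integral>\<^sup>+\<omega>. ennreal (Phi th t \<omega>) \<partial>M)"
    by (simp add: Phi_def qq_def)
  finally show ?thesis .
qed

lemma moment_bound: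
  assumes th: "0 < th" "th \<le> 1"
  shows "(\<integral>\<^sup>+\<omega>. ennreal (Phi th t \<omega>) \<partial>M) \<le> K th ^ t * ennreal (\<Sum>x\<in>SS N0 rA 0. \<bar>N0 x\<bar> powr th)"
proof (induction t)
  case 0
  show ?case by (simp add: Phi_def emeasure_space_1)
next
  case (Suc t)
  have "(\<integral>\<^sup>+\<omega>. ennreal (Phi th (Suc t) \<omega>) \<partial>M) \<le> K th * (\<integral>\<^sup>+\<omega>. ennreal (Phi th t \<omega>) \<partial>M)"
    by (rule moment_step[OF th])
  also have "\<dots> \<le> K th * (K th ^ t * ennreal (\<Sum>x\<in>SS N0 rA 0. \<bar>N0 x\<bar> powr th))"
    by (rule mult_left_mono[OF Suc.IH]) simp
  finally show ?case by (simp add: mult.assoc)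
qed

end



lemma final_bound:
  fixes q :: "'a \<Rightarrow> real"
  assumes S: "finite S" and th: "0 < th" "th \<le> 1" and s: "s > 0" and r: "0 < r"
    and P: "(\<Sum>x\<in>S. \<bar>q x\<bar> powr th) < (r * s powr th) ^ t"
  shows "(\<Sum>x\<in>S. \<bar>q x\<bar>) / s ^ t \<le> exp (- (- ln r / th) * real t)"
proof -
  define T where "T = (\<Sum>x\<in>S. \<bar>q x\<bar>)"
  have T0: "T \<ge> 0" unfolding T_def by (simp add: sum_nonneg)
  show ?thesis
  proof (cases "T = 0")
    case True then show ?thesis by (simp add: T_def[symmetric])
  next
    case False
    then have Tp: "T > 0" using T0 by simp
    have "T powr th \<le> (\<Sum>x\<in>S. \<bar>q x\<bar> powr th)" unfolding T_def
      by (rule powr_sum_subadd) (use S th in auto)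
    then have lt: "T powr th < (r * s powr th) ^ t" using P by simp
    have "T powr th = exp (th * ln T)" using Tp by (simp add: powr_def)
    moreover have "(r * s powr th) ^ t = exp (real t * (ln r + th * ln s))"
    proof -
      have "exp (real t * (ln r + th * ln s)) = exp (ln r + th * ln s) ^ t" by (rule exp_of_nat_mult)
      also have "exp (ln r + th * ln s) = r * s powr th" using r s by (simp add: exp_add powr_def)
      finally show ?thesis by simp
    qed
    ultimately have "th * ln T < real t * (ln r + th * ln s)" using lt by simp
    then have "ln T < real t * ln r / th + real t * ln s" using th by (simp add: field_simps)
    then have "T < exp (real t * ln r / th + real t * ln s)"
      using Tp by (metis exp_less_cancel_iff exp_ln)
    also have "\<dots> = exp (real t * ln r / th) * s ^ t"
    proof -
      have "exp (real t * ln s) = s ^ t" using s by (simp add: exp_of_nat_mult)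
      then show ?thesis by (simp add: exp_add)
    qed
    finally have "T / s ^ t < exp (real t * ln r / th)" using s by (simp add: divide_less_eq)
    then show ?thesis unfolding T_def by (simp add: mult.commute)
  qed
qed

context sys begin

lemma decay:
  fixes s th Kr :: real
  assumes th: "0 < th" "th < 1" and s: "s > 0"
    and KK: "K th = ennreal Kr" "0 \<le> Kr" "Kr < s powr th"
  shows "\<exists>c>0. AE \<omega> in M. (\<lambda>t. infsum (\<lambda>x. \<bar>pop N0 A t \<omega> x / s ^ t\<bar>) UNIV) \<in> O(\<lambda>t. exp (- c * real t))"
proof -
  define b where "b = (Kr + s powr th) / 2"
  have b: "Kr < b" "b < s powr th" "0 < b" using KK s by (auto simp: b_def)
  define r where "r = b / s powr th"
  have r: "0 < r" "r < 1" using b s by (auto simp: r_def)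
  have br: "b = r * s powr th" using s by (simp add: r_def)
  define c where "c = - ln r / th"
  have "ln r < 0" using r by simp
  then have c: "c > 0" using th unfolding c_def by (intro divide_pos_pos) auto
  define C0 where "C0 = (\<Sum>x\<in>SS N0 rA 0. \<bar>N0 x\<bar> powr th)"
  have C0: "C0 \<ge> 0" unfolding C0_def by (simp add: sum_nonneg)
  define E where "E t = {\<omega> \<in> space M. b ^ t \<le> Phi th t \<omega>}" for t
  have E_sets: "E t \<in> sets M" for t
    unfolding E_def using Phi_meas[of th t] by measurable
  have nn_le: "(\<integral>\<^sup>+\<omega>. ennreal (Phi th t \<omega>) \<partial>M) \<le> ennreal (Kr ^ t * C0)" for t
    using moment_bound[of th t] th KK C0 by (simp add: C0_def ennreal_power ennreal_mult)
  have int: "integrable M (Phi th t)" for t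
  proof (rule integrableI_bounded)
    show "Phi th t \<in> borel_measurable M" by (rule Phi_meas)
    have "(\<integral>\<^sup>+\<omega>. ennreal (norm (Phi th t \<omega>)) \<partial>M) = (\<integral>\<^sup>+\<omega>. ennreal (Phi th t \<omega>) \<partial>M)"
      using Phi_nonneg by simp
    also have "\<dots> < \<infinity>" using nn_le[of t] by (simp add: order_le_less_trans)
    finally show "(\<integral>\<^sup>+\<omega>. ennreal (norm (Phi th t \<omega>)) \<partial>M) < \<infinity>" .
  qed
  have intle: "integral\<^sup>L M (Phi th t) \<le> Kr ^ t * C0" for t
  proof -
    have "ennreal (integral\<^sup>L M (Phi th t)) = (\<integral>\<^sup>+\<omega>. ennreal (Phi th t \<omega>) \<partial>M)"
      by (rule nn_integral_eq_integral[symmetric]) (use int Phi_nonneg in auto)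
    then have "ennreal (integral\<^sup>L M (Phi th t)) \<le> ennreal (Kr ^ t * C0)" using nn_le[of t] by simp
    then show ?thesis using KK C0 by (simp add: ennreal_le_iff)
  qed
  have meas_le: "measure M (E t) \<le> C0 * (Kr / b) ^ t" for t
  proof -
    have "measure M (E t) \<le> integral\<^sup>L M (Phi th t) / b ^ t"
      unfolding E_def by (rule integral_Markov_inequality_measure) (use int Phi_nonneg b in auto)
    also have "\<dots> \<le> Kr ^ t * C0 / b ^ t" using intle[of t] b by (simp add: divide_right_mono)
    also have "\<dots> = C0 * (Kr / b) ^ t" by (simp add: power_divide)
    finally show ?thesis .
  qed
  have summ: "summable (\<lambda>t. measure M (E t))"
  proof (rule summable_comparison_test')
    show "summable (\<lambda>t. C0 * (Kr / b) ^ t)"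
      by (rule summable_mult, rule summable_geometric) (use KK b in auto)
    show "norm (measure M (E t)) \<le> C0 * (Kr / b) ^ t" for t using meas_le[of t] by simp
  qed
  have BC: "AE \<omega> in M. eventually (\<lambda>t. \<omega> \<in> space M - E t) sequentially"
    by (rule borel_cantelli_AE1[OF E_sets _ summ]) (simp add: less_top[symmetric])
  show ?thesis
  proof (intro exI[of _ c] conjI c)
    show "AE \<omega> in M. (\<lambda>t. infsum (\<lambda>x. \<bar>pop N0 A t \<omega> x / s ^ t\<bar>) UNIV) \<in> O(\<lambda>t. exp (- c * real t))"
      using BC AE_good
    proof eventually_elim
      case (elim \<omega>)
      show ?case
      proof (rule bigoI[where c = 1])
        show "eventually (\<lambda>t. norm (infsum (\<lambda>x. \<bar>pop N0 A t \<omega> x / s ^ t\<bar>) UNIV) \<le> 1 * norm (exp (- c * real t))) at_top"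
          using elim(1)
        proof eventually_elim
          case (elim t)
          then have lt: "Phi th t \<omega> < b ^ t" by (auto simp: E_def)
          have fin: "finite (SS N0 rA t)" by (rule finite_SS[OF N0_fin])
          have "infsum (\<lambda>x. \<bar>pop N0 A t \<omega> x / s ^ t\<bar>) UNIV
                = infsum (\<lambda>x. \<bar>Q N0 rA t (\<lambda>i. A i \<omega>) x / s ^ t\<bar>) (SS N0 rA t)"
            unfolding pop_Q[of rA A \<omega> N0 t, OF \<open>good rA (\<lambda>i. A i \<omega>)\<close> N0_fin N0_nonneg]
            by (rule infsum_cong_neutral) (use Q_zero[OF \<open>good rA (\<lambda>i. A i \<omega>)\<close> _ N0_nonneg] in auto)
          also have "\<dots> = (\<Sum>x\<in>SS N0 rA t. \<bar>Q N0 rA t (\<lambda>i. A i \<omega>) x\<bar>) / s ^ t"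
            using fin s by (simp add: sum_divide_distrib)
          also have "\<dots> \<le> exp (- c * real t)" unfolding c_def
            by (rule final_bound[OF fin th(1) _ s r(1)]) (use th lt br in \<open>auto simp: Phi_def\<close>)
          finally have le: "infsum (\<lambda>x. \<bar>pop N0 A t \<omega> x / s ^ t\<bar>) UNIV \<le> exp (- c * real t)" .
          have "0 \<le> infsum (\<lambda>x. \<bar>pop N0 A t \<omega> x / s ^ t\<bar>) UNIV" by (rule infsum_nonneg) simp
          then show ?case using le by simp
        qed
      qed
    qed
  qed
qed

end



lemma powr_le_one_sq:
  fixes x th :: real assumes "x \<ge> 0" "0 < th" "th \<le> 1"
  shows "x powr th \<le> 1 + x\<^sup>2"
proof (cases "x \<le> 1")
  case True
  then have "x powr th \<le> 1 powr th" using assms by (intro powr_mono2) auto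
  then have "x powr th \<le> 1" by simp
  moreover have "0 \<le> x\<^sup>2" by simp
  ultimately show ?thesis by linarith
next
  case False
  then have "x powr th \<le> x powr 1" using assms by (intro powr_mono) auto
  also have "\<dots> \<le> x\<^sup>2" using False by (simp add: power2_eq_square)
  finally show ?thesis by simp
qed

theorem theorem3p1:
  fixes M :: "'w measure"
    and A :: "nat \<Rightarrow> 'w \<Rightarrow> int ^ 'd::finite \<Rightarrow> int ^ 'd \<Rightarrow> real"
    and N0 :: "int ^ 'd \<Rightarrow> real"
    and rA :: nat
  defines "a \<equiv> (\<lambda>y. prob_space.expectation M (\<lambda>\<omega>. A 1 \<omega> 0 y))"
  defines "asum \<equiv> infsum a UNIV"
  assumes "prob_space M"
    and iid_indep: "prob_space.indep_vars M (\<lambda>_. matM) A {1..}"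
    and iid_distr: "\<And>t. t \<ge> 1 \<Longrightarrow> distr M matM (A t) = distr M matM (A 1)"
    and nonneg: "\<And>x y. AE \<omega> in M. A 1 \<omega> x y \<ge> 0"
    and cols_indep: "prob_space.indep_vars M (\<lambda>_. colM) (\<lambda>y \<omega>. \<lambda>x. A 1 \<omega> x y) UNIV"
    and square_int: "\<And>x y. integrable M (\<lambda>\<omega>. (A 1 \<omega> x y)\<^sup>2)"
    and range: "\<And>x y. l1norm (x - y) > int rA \<Longrightarrow> (AE \<omega> in M. A 1 \<omega> x y = 0)"
    and shift: "\<And>z. distr M matM (\<lambda>\<omega>. \<lambda>x y. A 1 \<omega> (x + z) (y + z)) = distr M matM (A 1)"
    and basis: "\<exists>B \<subseteq> embR ` {x. infsum (\<lambda>y. a (x + y) * a y) UNIV \<noteq> 0}.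
                  independent B \<and> span B = UNIV"
    and N0_nonneg: "\<And>x. N0 x \<ge> 0"
    and N0_supp: "finite {x. N0 x > 0}" "{x. N0 x > 0} \<noteq> {}"
    and entropy: "infsum (\<lambda>y. prob_space.expectation M (\<lambda>\<omega>. A 1 \<omega> 0 y * ln (A 1 \<omega> 0 y))) UNIV
                    > asum * ln asum"
  shows "\<exists>c>0. AE \<omega> in M.
           (\<lambda>t. infsum (\<lambda>x. \<bar>pop N0 A t \<omega> x / asum ^ t\<bar>) UNIV) \<in> O(\<lambda>t. exp (- c * real t))"
proof -
  interpret prob_space M by fact
  have sysM: "sys M A N0 rA"
  proof (rule sys.intro)
    show "prob_space M" by fact
    show "sys_axioms M A N0 rA"
    proof (rule sys_axioms.intro)
      show "prob_space.indep_vars M (\<lambda>_. matM) A {1..}" by (rule iid_indep)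
      show "distr M matM (A t) = distr M matM (A 1)" if "t \<ge> 1" for t using that by (rule iid_distr)
      show "AE \<omega> in M. A 1 \<omega> x y = 0" if "int rA < l1norm (x - y)" for x y using that by (rule range)
      show "distr M matM (\<lambda>\<omega> x y. A 1 \<omega> (x + z) (y + z)) = distr M matM (A 1)" for z by (rule shift)
      show "N0 x \<ge> 0" for x by (rule N0_nonneg)
      show "finite {x. N0 x > 0}" by (rule N0_supp(1))
    qed
  qed
  interpret S: sys M A N0 rA by (rule sysM)
  define Z where "Z = {z :: int ^ 'd. l1norm z \<le> int rA}"
  have Zfin: "finite Z" unfolding Z_def by (rule finite_l1ball)
  define X where "X z \<omega> = \<bar>A 1 \<omega> 0 z\<bar>" for z \<omega>
  have Xm: "X z \<in> borel_measurable M" for z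
    unfolding X_def using S.A_entry_meas[of 1 0 z] by measurable
  have Xsq: "integrable M (\<lambda>\<omega>. (X z \<omega>)\<^sup>2)" for z
    unfolding X_def using square_int[of 0 z] by simp
  have Xnn: "X z \<omega> \<ge> 0" for z \<omega> unfolding X_def by simp
  have zero_out: "AE \<omega> in M. A 1 \<omega> 0 z = 0" if "z \<notin> Z" for z
  proof -
    have "l1norm (0 - z) = l1norm z" using l1norm_minus_commute[of 0 z] by simp
    then show ?thesis using range[of 0 z] that by (simp add: Z_def)
  qed
  have aX: "a z = expectation (X z)" for z
    unfolding a_def X_def by (rule integral_cong_AE) (use nonneg[of 0 z] S.A_entry_meas[of 1 0 z] in auto)
  have a_nn: "a z \<ge> 0" for z unfolding aX by (simp add: Xnn)
  have a_out: "a z = 0" if "z \<notin> Z" for z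
  proof -
    have "a z = expectation (\<lambda>\<omega>. 0)"
      unfolding a_def by (rule integral_cong_AE) (use zero_out[OF that] S.A_entry_meas[of 1 0 z] in auto)
    then show ?thesis by simp
  qed
  have asum_eq: "asum = (\<Sum>z\<in>Z. expectation (X z))"
  proof -
    have "asum = infsum a Z"
      unfolding asum_def by (rule infsum_cong_neutral) (use a_out in auto)
    also have "\<dots> = (\<Sum>z\<in>Z. a z)" using Zfin by simp
    finally show ?thesis by (simp add: aX)
  qed
  have ent_eq: "infsum (\<lambda>y. expectation (\<lambda>\<omega>. A 1 \<omega> 0 y * ln (A 1 \<omega> 0 y))) UNIV
      = (\<Sum>z\<in>Z. expectation (\<lambda>\<omega>. X z \<omega> * ln (X z \<omega>)))"
  proof -
    have "infsum (\<lambda>y. expectation (\<lambda>\<omega>. A 1 \<omega> 0 y * ln (A 1 \<omega> 0 y))) UNIV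
        = infsum (\<lambda>y. expectation (\<lambda>\<omega>. A 1 \<omega> 0 y * ln (A 1 \<omega> 0 y))) Z"
    proof (rule infsum_cong_neutral)
      fix z assume "z \<in> UNIV - Z"
      then have z0: "AE \<omega> in M. A 1 \<omega> 0 z = 0" using zero_out by auto
      have "expectation (\<lambda>\<omega>. A 1 \<omega> 0 z * ln (A 1 \<omega> 0 z)) = expectation (\<lambda>\<omega>. 0)"
      proof (rule integral_cong_AE)
        show "(\<lambda>\<omega>. A 1 \<omega> 0 z * ln (A 1 \<omega> 0 z)) \<in> borel_measurable M"
          using S.A_entry_meas[of 1 0 z] by measurable
        show "AE \<omega> in M. A 1 \<omega> 0 z * ln (A 1 \<omega> 0 z) = 0"
          using z0 by eventually_elim simp
      qed simp
      then show "expectation (\<lambda>\<omega>. A 1 \<omega> 0 z * ln (A 1 \<omega> 0 z)) = 0" by simp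
    qed auto
    also have "\<dots> = (\<Sum>z\<in>Z. expectation (\<lambda>\<omega>. A 1 \<omega> 0 z * ln (A 1 \<omega> 0 z)))" using Zfin by simp
    also have "\<dots> = (\<Sum>z\<in>Z. expectation (\<lambda>\<omega>. X z \<omega> * ln (X z \<omega>)))"
    proof (rule sum.cong[OF refl])
      fix z
      show "expectation (\<lambda>\<omega>. A 1 \<omega> 0 z * ln (A 1 \<omega> 0 z)) = expectation (\<lambda>\<omega>. X z \<omega> * ln (X z \<omega>))"
      proof (rule integral_cong_AE)
        show "(\<lambda>\<omega>. A 1 \<omega> 0 z * ln (A 1 \<omega> 0 z)) \<in> borel_measurable M"
          using S.A_entry_meas[of 1 0 z] by measurable
        show "(\<lambda>\<omega>. X z \<omega> * ln (X z \<omega>)) \<in> borel_measurable M" using Xm[of z] by measurable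
        show "AE \<omega> in M. A 1 \<omega> 0 z * ln (A 1 \<omega> 0 z) = X z \<omega> * ln (X z \<omega>)"
          using nonneg[of 0 z] by eventually_elim (simp add: X_def)
      qed
    qed
    finally show ?thesis .
  qed
  have s_pos: "asum > 0"
  proof (rule ccontr)
    assume "\<not> asum > 0"
    moreover have "asum \<ge> 0" unfolding asum_eq by (intro sum_nonneg) (simp add: Xnn)
    ultimately have "asum = 0" by simp
    then have "\<forall>z\<in>Z. expectation (X z) = 0"
      using Zfin by (simp add: asum_eq sum_nonneg_eq_0_iff Xnn)
    then have a0: "a z = 0" for z using a_out aX by (cases "z \<in> Z") auto
    then have "{x. infsum (\<lambda>y. a (x + y) * a y) UNIV \<noteq> 0} = {}" by simp
    with basis obtain B :: "(real ^ 'd) set" where "B \<subseteq> {}" "span B = UNIV" by auto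
    then have "span ({} :: (real ^ 'd) set) = UNIV" by simp
    then have "(1 :: real ^ 'd) = 0" by (metis UNIV_I singletonD span_empty)
    then show False by (simp add: vec_eq_iff)
  qed
  obtain th where th: "0 < th" "th < 1" "(\<Sum>z\<in>Z. expectation (\<lambda>\<omega>. X z \<omega> powr th)) < asum powr th"
    using exists_theta[OF Zfin Xm Xsq Xnn asum_eq s_pos] entropy ent_eq by auto
  define Kr where "Kr = (\<Sum>z\<in>Z. expectation (\<lambda>\<omega>. X z \<omega> powr th))"
  have intP: "integrable M (\<lambda>\<omega>. X z \<omega> powr th)" for z
  proof (rule Bochner_Integration.integrable_bound[OF Bochner_Integration.integrable_add[OF integrable_const[of 1] Xsq[of z]]])
    show "(\<lambda>\<omega>. X z \<omega> powr th) \<in> borel_measurable M" using Xm[of z] by measurable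
    show "AE \<omega> in M. norm (X z \<omega> powr th) \<le> norm (1 + (X z \<omega>)\<^sup>2)"
      using powr_le_one_sq[OF Xnn[of z] th(1) less_imp_le[OF th(2)]] by simp
  qed
  have KK: "S.K th = ennreal Kr"
  proof -
    have "S.K th = (\<Sum>z\<in>Z. ennreal (expectation (\<lambda>\<omega>. X z \<omega> powr th)))"
      unfolding S.K_def Z_def[symmetric]
    proof (intro sum.cong refl)
      fix z
      show "(\<integral>\<^sup>+\<omega>. ennreal (\<bar>A 1 \<omega> 0 z\<bar> powr th) \<partial>M) = ennreal (expectation (\<lambda>\<omega>. X z \<omega> powr th))"
        using nn_integral_eq_integral[OF intP[of z]] by (simp add: X_def)
    qed
    also have "\<dots> = ennreal Kr" unfolding Kr_def by (simp add: Xnn)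
    finally show ?thesis .
  qed
  have Kr0: "Kr \<ge> 0" unfolding Kr_def by (intro sum_nonneg integral_nonneg) (simp add: Xnn)
  show ?thesis
    using S.decay[OF th(1,2) s_pos KK Kr0] th(3) unfolding Kr_def by simp
qed


end
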